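(* Let $d\ge1$, $\sigma_0>0$ and $W_*\in\mathbb{R}^{d\times d}$. Consider the quadratic network $f_W(x)=\sum_{i=1}^d(w_i^Tx)^2=x^TW^TWx=\langle W^TW,xx^T\rangle$ with weight matrix $W\in\mathbb{R}^{d\times d}$ (rows $w_i$), labels $y(x)=x^TW_*^TW_*x$, inputs $x\sim\mathcal N(0,I_d)$, initialization satisfying $W(0)^TW(0)=\sigma_0I$, trained by gradient flow $\dot W=-\nabla_W\ell_{var}(W)$ on the variance loss $$\ell_{var}(W)=\frac1{16}\mathbb{E}_x\big[(y(x)-f_W(x))^2\big]-\frac1{16}\big(\mathbb{E}_x[y(x)-f_W(x)]\big)^2.$$ Then $W^TW$ and $W_*^TW_*$ remain simultaneously diagonalized by a fixed orthogonal matrix and $$\dot\sigma_i(t)=\sigma_i(t)(\sigma_i^*-\sigma_i(t)),$$ where $\sigma_i$ and $\sigma_i^*$ are the $i$th eigenvalues (singular values) of $W^TW$ and $W_*^TW_*$ respectively, corresponding to the same eigenvector.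
   Context: $\langle X,Y\rangle=\mathrm{tr}(X^TY)$. Gradient flow means $W(t)$ solves $\dot W=-\nabla_W\ell_{var}(W)$ in continuous time. *)

theory Defs
  imports "HOL-Probability.Probability"
begin

definition std_gaussian :: "(real^'d) measure" where
  "std_gaussian = density lborel (\<lambda>x. ennreal (\<Prod>i\<in>UNIV. std_normal_density (x $ i)))"

definition qnet :: "real^'d^'d \<Rightarrow> real^'d \<Rightarrow> real" where
  "qnet W x = x \<bullet> ((transpose W ** W) *v x)"

definition loss_var :: "real^'d^'d \<Rightarrow> real^'d^'d \<Rightarrow> real" where
  "loss_var Ws W =
     (1/16) * (\<integral>x. (qnet Ws x - qnet W x)^2 \<partial>std_gaussian)
   - (1/16) * (\<integral>x. (qnet Ws x - qnet W x) \<partial>std_gaussian)^2"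

end

theory Submission
  imports Defs
begin


lemma Basis_vec_real: "(Basis :: (real^'d) set) = range (\<lambda>i. axis i 1)"
  by (auto simp: Basis_vec_def)

lemma inj_axis1: "inj (\<lambda>i::'d::finite. axis i (1::real))"
  by (auto simp: inj_def axis_eq_axis)

lemma vec_sum_axis: "(\<Sum>b\<in>(Basis::(real^'d::finite) set). f b *\<^sub>R b) $ i = f (axis i 1)"
proof -
  have "(\<Sum>b\<in>(Basis::(real^'d) set). f b *\<^sub>R b) $ i = (\<Sum>j\<in>UNIV. f (axis j 1) * (axis j 1 $ i))"
    by (simp add: Basis_vec_real sum.reindex[OF inj_axis1])
  also have "\<dots> = (\<Sum>j\<in>UNIV. if j = i then f (axis j 1) else 0)"
    by (rule sum.cong) (auto simp: axis_def)
  also have "\<dots> = f (axis i 1)" by simp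
  finally show ?thesis .
qed

lemma vec_sum_axis': "(\<Sum>b\<in>(Basis::(real^'d::finite) set). f b * b $ i) = f (axis i 1)"
  using vec_sum_axis[of f i] by (simp add: sum_component)

lemma lborel_prod_integral:
  fixes k :: "'d::finite \<Rightarrow> real \<Rightarrow> real"
  assumes int: "\<And>i. integrable lborel (k i)"
  shows "integrable lborel (\<lambda>x::real^'d. \<Prod>i\<in>UNIV. k i (x $ i))"
    and "(\<integral>x. (\<Prod>i\<in>UNIV. k i (x $ i)) \<partial>(lborel::(real^'d) measure)) = (\<Prod>i\<in>UNIV. integral\<^sup>L lborel (k i))"
proof -
  interpret product_sigma_finite "\<lambda>_::real^'d. lborel::real measure" by standard
  define kk where "kk = (\<lambda>b::real^'d. k (SOME i. axis i 1 = b))"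
  have kk: "kk (axis i 1) = k i" for i
    unfolding kk_def by (rule arg_cong[where f=k]) (auto simp: axis_eq_axis)
  have [measurable]: "k i \<in> borel_measurable borel" for i
    using borel_measurable_integrable[OF int[of i]] by simp
  have meas: "(\<lambda>x::real^'d. \<Prod>i\<in>UNIV. k i (x $ i)) \<in> borel_measurable borel"
    by measurable
  have eq: "(\<Prod>i\<in>UNIV. k i ((\<Sum>b\<in>Basis. f b *\<^sub>R b) $ i)) = (\<Prod>b\<in>Basis. kk b (f b))" for f :: "real^'d \<Rightarrow> real"
    unfolding vec_sum_axis by (simp add: Basis_vec_real prod.reindex[OF inj_axis1] kk)
  have intk: "b \<in> Basis \<Longrightarrow> integrable lborel (kk b)" for b
    by (auto simp: Basis_vec_real kk int)
  have I: "integrable (Pi\<^sub>M Basis (\<lambda>_. lborel)) (\<lambda>f. \<Prod>b\<in>(Basis::(real^'d) set). kk b (f b))"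
    by (rule product_integrable_prod) (auto intro: intk)
  have I2: "integrable (Pi\<^sub>M Basis (\<lambda>_. lborel)) (\<lambda>f. \<Prod>i\<in>UNIV. k i ((\<Sum>b\<in>(Basis::(real^'d) set). f b *\<^sub>R b) $ i))"
    using I by (simp only: eq)
  show "integrable lborel (\<lambda>x::real^'d. \<Prod>i\<in>UNIV. k i (x $ i))"
    apply (subst lborel_eq)
    apply (subst integrable_distr_eq)
      apply measurable
    using meas apply simp
    using I2 by simp
  have "(\<integral>x. (\<Prod>i\<in>UNIV. k i (x $ i)) \<partial>(lborel::(real^'d) measure))
      = (\<integral>f. (\<Prod>b\<in>(Basis::(real^'d) set). kk b (f b)) \<partial>(Pi\<^sub>M Basis (\<lambda>_. lborel)))"
    apply (subst lborel_eq)
    apply (subst integral_distr)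
      apply measurable
    using meas apply simp
    apply (simp only: vec_sum_axis')
    by (simp add: Basis_vec_real prod.reindex[OF inj_axis1] kk)
  also have "\<dots> = (\<Prod>b\<in>(Basis::(real^'d) set). integral\<^sup>L lborel (kk b))"
    by (rule product_integral_prod) (auto intro: intk)
  also have "\<dots> = (\<Prod>i\<in>UNIV. integral\<^sup>L lborel (k i))"
    by (simp add: Basis_vec_real prod.reindex[OF inj_axis1] kk)
  finally show "(\<integral>x. (\<Prod>i\<in>UNIV. k i (x $ i)) \<partial>(lborel::(real^'d) measure)) = (\<Prod>i\<in>UNIV. integral\<^sup>L lborel (k i))" .
qed


lemma gauss_prod:
  fixes h :: "'d::finite \<Rightarrow> real \<Rightarrow> real"
  assumes meas[measurable]: "\<And>i. h i \<in> borel_measurable borel"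
    and int: "\<And>i. integrable lborel (\<lambda>t. std_normal_density t * h i t)"
  shows "integrable std_gaussian (\<lambda>x::real^'d. \<Prod>i\<in>UNIV. h i (x $ i))"
    and "(\<integral>x. (\<Prod>i\<in>UNIV. h i (x $ i)) \<partial>(std_gaussian::(real^'d) measure))
          = (\<Prod>i\<in>UNIV. \<integral>t. std_normal_density t * h i t \<partial>lborel)"
proof -
  have gm[measurable]: "(\<lambda>x::real^'d. \<Prod>i\<in>UNIV. std_normal_density (x $ i)) \<in> borel_measurable lborel"
    by measurable
  have fm[measurable]: "(\<lambda>x::real^'d. \<Prod>i\<in>UNIV. h i (x $ i)) \<in> borel_measurable lborel"
    by measurable
  have nn: "AE x in lborel. 0 \<le> (\<Prod>i\<in>UNIV. std_normal_density ((x::real^'d) $ i))"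
    by (intro AE_I2 prod_nonneg) simp
  have eq: "(\<Prod>i\<in>UNIV. std_normal_density ((x::real^'d) $ i)) *\<^sub>R (\<Prod>i\<in>UNIV. h i (x $ i))
     = (\<Prod>i\<in>UNIV. std_normal_density (x $ i) * h i (x $ i))" for x
    by (simp add: prod.distrib)
  show "integrable std_gaussian (\<lambda>x::real^'d. \<Prod>i\<in>UNIV. h i (x $ i))"
    unfolding std_gaussian_def
    apply (subst integrable_density[OF fm gm nn])
    unfolding eq
    by (rule lborel_prod_integral(1)[OF int])
  show "(\<integral>x. (\<Prod>i\<in>UNIV. h i (x $ i)) \<partial>(std_gaussian::(real^'d) measure))
          = (\<Prod>i\<in>UNIV. \<integral>t. std_normal_density t * h i t \<partial>lborel)"
    unfolding std_gaussian_def
    apply (subst integral_density[OF fm gm nn])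
    unfolding eq
    by (rule lborel_prod_integral(2)[OF int])
qed


definition mom :: "nat \<Rightarrow> real" where
  "mom n = (\<integral>t. std_normal_density t * t ^ n \<partial>lborel)"

lemma int_mom: "integrable lborel (\<lambda>t. std_normal_density t * t ^ n)"
  using integrable_std_normal_moment[of n] by simp

lemma mom_vals: "mom 0 = 1" "mom 1 = 0" "mom 2 = 1" "mom 3 = 0" "mom 4 = 3"
proof -
  show "mom 0 = 1" using integral_std_normal_moment_even[of 0] by (simp add: mom_def)
  show "mom 2 = 1" using integral_std_normal_moment_even[of 1] by (simp add: mom_def)
  show "mom 4 = 3" using integral_std_normal_moment_even[of 2] by (simp add: mom_def fact_numeral)
  show "mom 1 = 0" using integral_std_normal_moment_odd[of 0] by (simp add: mom_def)
  show "mom 3 = 0" using integral_std_normal_moment_odd[of 1] by (simp add: mom_def numeral_3_eq_3)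
qed

lemma mom_Suc: "mom (Suc 0) = 0" "mom (Suc (Suc 0)) = 1" "mom (Suc (Suc (Suc 0))) = 0" "mom (Suc (Suc (Suc (Suc 0)))) = 3"
  using mom_vals by (simp_all add: numeral_eq_Suc)

lemma prod_pow_delta: "(\<Prod>i\<in>UNIV. (x $ i) ^ (if i = a then 1 else 0)) = (x::real^'d::finite) $ a"
proof -
  have "(\<Prod>i\<in>UNIV. (x $ i) ^ (if i = a then 1 else 0)) = (\<Prod>i\<in>UNIV. if i = a then x $ i else 1)"
    by (rule prod.cong) auto
  then show ?thesis by simp
qed

definition cnt4 :: "'d \<Rightarrow> 'd \<Rightarrow> 'd \<Rightarrow> 'd \<Rightarrow> 'd \<Rightarrow> nat" where
  "cnt4 a b c e i = (if i = a then 1 else 0) + (if i = b then 1 else 0) + (if i = c then 1 else 0) + (if i = e then 1 else 0)"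

definition cnt2 :: "'d \<Rightarrow> 'd \<Rightarrow> 'd \<Rightarrow> nat" where
  "cnt2 a b i = (if i = a then 1 else 0) + (if i = b then 1 else 0)"

lemma prod4: "(x::real^'d::finite) $ a * x $ b * x $ c * x $ e = (\<Prod>i\<in>UNIV. (x $ i) ^ cnt4 a b c e i)"
  unfolding cnt4_def power_add prod.distrib prod_pow_delta ..

lemma prod2: "(x::real^'d::finite) $ a * x $ b = (\<Prod>i\<in>UNIV. (x $ i) ^ cnt2 a b i)"
  unfolding cnt2_def power_add prod.distrib prod_pow_delta ..

lemma gauss_mom:
  fixes n :: "'d::finite \<Rightarrow> nat"
  shows "integrable std_gaussian (\<lambda>x::real^'d. \<Prod>i\<in>UNIV. (x $ i) ^ n i)"
    and "(\<integral>x. (\<Prod>i\<in>UNIV. (x $ i) ^ n i) \<partial>(std_gaussian::(real^'d) measure)) = (\<Prod>i\<in>UNIV. mom (n i))"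
  using gauss_prod[of "\<lambda>i t. t ^ n i", OF _ int_mom] by (auto simp: mom_def)

lemma prod_supp:
  assumes "\<And>i. i \<notin> S \<Longrightarrow> n i = (0::nat)"
  shows "(\<Prod>i\<in>(UNIV::'d::finite set). mom (n i)) = (\<Prod>i\<in>S. mom (n i))"
  by (rule prod.mono_neutral_right) (auto simp: assms mom_vals)

lemma gauss2:
  "integrable std_gaussian (\<lambda>x::real^'d::finite. x $ a * x $ b)"
  "(\<integral>x. x $ a * x $ b \<partial>(std_gaussian::(real^'d) measure)) = (if a = b then 1 else 0)"
proof -
  show "integrable std_gaussian (\<lambda>x::real^'d::finite. x $ a * x $ b)"
    unfolding prod2 by (rule gauss_mom)
  have "(\<integral>x. x $ a * x $ b \<partial>(std_gaussian::(real^'d) measure)) = (\<Prod>i\<in>UNIV. mom (cnt2 a b i))"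
    unfolding prod2 by (rule gauss_mom)
  also have "\<dots> = (\<Prod>i\<in>{a,b}. mom (cnt2 a b i))"
    by (rule prod_supp) (auto simp: cnt2_def)
  also have "\<dots> = (if a = b then 1 else 0)"
    by (cases "a = b") (auto simp: cnt2_def mom_Suc)
  finally show "(\<integral>x. x $ a * x $ b \<partial>(std_gaussian::(real^'d) measure)) = (if a = b then 1 else 0)" .
qed

lemma gauss4:
  "integrable std_gaussian (\<lambda>x::real^'d::finite. x $ a * x $ b * x $ c * x $ e)"
  "(\<integral>x. x $ a * x $ b * x $ c * x $ e \<partial>(std_gaussian::(real^'d) measure)) =
     (if a = b \<and> c = e then 1 else 0) + (if a = c \<and> b = e then 1 else 0) + (if a = e \<and> b = c then 1 else 0)"
proof -
  show "integrable std_gaussian (\<lambda>x::real^'d::finite. x $ a * x $ b * x $ c * x $ e)"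
    unfolding prod4 by (rule gauss_mom)
  have "(\<integral>x. x $ a * x $ b * x $ c * x $ e \<partial>(std_gaussian::(real^'d) measure)) = (\<Prod>i\<in>UNIV. mom (cnt4 a b c e i))"
    unfolding prod4 by (rule gauss_mom)
  also have "\<dots> = (\<Prod>i\<in>{a,b,c,e}. mom (cnt4 a b c e i))"
    by (rule prod_supp) (auto simp: cnt4_def)
  also have "\<dots> = (if a = b \<and> c = e then 1 else 0) + (if a = c \<and> b = e then 1 else 0) + (if a = e \<and> b = c then 1 else 0)"
    by (cases "a = b"; cases "a = c"; cases "a = e"; cases "b = c"; cases "b = e"; cases "c = e")
       (auto simp: cnt4_def mom_Suc insert_commute)
  finally show "(\<integral>x. x $ a * x $ b * x $ c * x $ e \<partial>(std_gaussian::(real^'d) measure)) =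
     (if a = b \<and> c = e then 1 else 0) + (if a = c \<and> b = e then 1 else 0) + (if a = e \<and> b = c then 1 else 0)" .
qed


definition quadf :: "real^'d^'d \<Rightarrow> real^'d \<Rightarrow> real" where
  "quadf M x = (\<Sum>a\<in>UNIV. \<Sum>b\<in>UNIV. M $ a $ b * (x $ a * x $ b))"

lemma quadf_int: "integrable std_gaussian (quadf (M::real^'d::finite^'d))"
  unfolding quadf_def by (simp add: integrable_sum gauss2 integrable_mult_right)

lemma quadf_E: "integral\<^sup>L std_gaussian (quadf (M::real^'d::finite^'d)) = (\<Sum>a\<in>UNIV. M $ a $ a)"
proof -
  have "integral\<^sup>L std_gaussian (quadf M) = (\<Sum>a\<in>UNIV. \<Sum>b\<in>UNIV. M $ a $ b * (if a = b then 1 else 0))"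
    unfolding quadf_def
    by (simp add: integral_sum integrable_sum gauss2 integrable_mult_right)
  also have "\<dots> = (\<Sum>a\<in>UNIV. M $ a $ a)"
    by (simp add: if_distrib cong: if_cong)
  finally show ?thesis .
qed

lemma if_conj0: "(if P \<and> Q then x else (0::real)) = (if P then if Q then x else 0 else 0)" by simp
lemma sum_if_pull: "(\<Sum>e\<in>A. if P then f e else (0::real)) = (if P then (\<Sum>e\<in>A. f e) else 0)" by simp

lemma mult_if01: "(x::real) * (if P then 1 else 0) = (if P then x else 0)" by simp

lemma quadf_sq: "(quadf M x)^2 = (\<Sum>a\<in>UNIV. \<Sum>c\<in>UNIV. \<Sum>b\<in>UNIV. \<Sum>e\<in>UNIV.
     (M $ a $ b * M $ c $ e) * (x $ a * x $ b * x $ c * x $ e))"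
  unfolding quadf_def power2_eq_square sum_product
  by (simp add: sum_product algebra_simps)

lemma quadf2_int: "integrable std_gaussian (\<lambda>x. (quadf (M::real^'d::finite^'d) x)^2)"
  unfolding quadf_sq by (simp add: integrable_sum gauss4 integrable_mult_right del: One_nat_def)

lemma quadf2_E: "(\<integral>x. (quadf (M::real^'d::finite^'d) x)^2 \<partial>std_gaussian) =
   (\<Sum>a\<in>UNIV. M $ a $ a)^2 + (\<Sum>a\<in>UNIV. \<Sum>b\<in>UNIV. (M $ a $ b)^2 + M $ a $ b * M $ b $ a)"
proof -
  have "(\<integral>x. (quadf M x)^2 \<partial>std_gaussian) = (\<Sum>a\<in>UNIV. \<Sum>c\<in>UNIV. \<Sum>b\<in>UNIV. \<Sum>e\<in>UNIV.
     (M $ a $ b * M $ c $ e) * ((if a = b \<and> c = e then 1 else 0) + (if a = c \<and> b = e then 1 else 0) + (if a = e \<and> b = c then 1 else 0)))"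
    unfolding quadf_sq
    by (simp add: integral_sum integrable_sum gauss4 integrable_mult_right del: One_nat_def)
  also have "\<dots> = (\<Sum>a\<in>UNIV. \<Sum>c\<in>UNIV. \<Sum>b\<in>UNIV. \<Sum>e\<in>UNIV. (if a = b \<and> c = e then M $ a $ b * M $ c $ e else 0))
     + (\<Sum>a\<in>UNIV. \<Sum>c\<in>UNIV. \<Sum>b\<in>UNIV. \<Sum>e\<in>UNIV. (if a = c \<and> b = e then M $ a $ b * M $ c $ e else 0))
     + (\<Sum>a\<in>UNIV. \<Sum>c\<in>UNIV. \<Sum>b\<in>UNIV. \<Sum>e\<in>UNIV. (if a = e \<and> b = c then M $ a $ b * M $ c $ e else 0))"
    by (simp add: sum.distrib distrib_left mult_if01)
  also have "\<dots> = (\<Sum>a\<in>UNIV. M $ a $ a)^2 + (\<Sum>a\<in>UNIV. \<Sum>b\<in>UNIV. (M $ a $ b)^2) + (\<Sum>a\<in>UNIV. \<Sum>b\<in>UNIV. M $ a $ b * M $ b $ a)"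
  proof -
    have 1: "(\<Sum>a\<in>UNIV. \<Sum>c\<in>UNIV. \<Sum>b\<in>UNIV. \<Sum>e\<in>UNIV. (if a = b \<and> c = e then M $ a $ b * M $ c $ e else 0)) = (\<Sum>a\<in>UNIV. M $ a $ a)^2"
      by (simp add: power2_eq_square sum_product if_conj0 sum_if_pull)
    have 2: "(\<Sum>a\<in>UNIV. \<Sum>c\<in>UNIV. \<Sum>b\<in>UNIV. \<Sum>e\<in>UNIV. (if a = c \<and> b = e then M $ a $ b * M $ c $ e else 0)) = (\<Sum>a\<in>UNIV. \<Sum>b\<in>UNIV. (M $ a $ b)^2)"
      by (simp add: power2_eq_square if_conj0 sum_if_pull)
    have 3: "(\<Sum>a\<in>UNIV. \<Sum>c\<in>UNIV. \<Sum>b\<in>UNIV. \<Sum>e\<in>UNIV. (if a = e \<and> b = c then M $ a $ b * M $ c $ e else 0)) = (\<Sum>a\<in>UNIV. \<Sum>b\<in>UNIV. M $ a $ b * M $ b $ a)"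
      by (simp add: if_conj0 sum_if_pull)
    show ?thesis using 1 2 3 by simp
  qed
  finally show ?thesis by (simp add: sum.distrib)
qed


lemma gram_entry: "(transpose X ** X) $ a $ b = (\<Sum>k\<in>UNIV. X $ k $ a * X $ k $ b)"
  for X :: "real^'d::finite^'d"
  by (simp add: matrix_matrix_mult_def transpose_def)

lemma gram_sym: "(transpose X ** X) $ a $ b = (transpose X ** X) $ b $ a"
  for X :: "real^'d::finite^'d"
  by (simp add: gram_entry mult.commute)

lemma qnet_diff: "qnet Ws x - qnet W x = quadf (transpose Ws ** Ws - transpose W ** W) x"
  for Ws W :: "real^'d::finite^'d"
  by (simp add: qnet_def quadf_def inner_vec_def matrix_vector_mult_def sum_distrib_left
      sum_subtractf algebra_simps)

definition lossf :: "real^'d^'d \<Rightarrow> real^'d^'d \<Rightarrow> real" where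
  "lossf Ws W = (1/8) * (\<Sum>a\<in>UNIV. \<Sum>b\<in>UNIV. ((transpose Ws ** Ws) $ a $ b - (transpose W ** W) $ a $ b)^2)"

lemma loss_var_eq: "loss_var Ws W = lossf Ws W"
  for Ws W :: "real^'d::finite^'d"
proof -
  define M where "M = transpose Ws ** Ws - transpose W ** W"
  have sym: "M $ b $ a = M $ a $ b" for a b
    unfolding M_def using gram_sym[of Ws a b] gram_sym[of W a b] by simp
  have "loss_var Ws W = (1/16) * ((\<Sum>a\<in>UNIV. M $ a $ a)^2 + (\<Sum>a\<in>UNIV. \<Sum>b\<in>UNIV. (M $ a $ b)^2 + M $ a $ b * M $ b $ a))
        - (1/16) * (\<Sum>a\<in>UNIV. M $ a $ a)^2"
    unfolding loss_var_def qnet_diff M_def[symmetric] quadf2_E quadf_E ..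
  also have "(\<Sum>a\<in>UNIV. \<Sum>b\<in>UNIV. (M $ a $ b)^2 + M $ a $ b * M $ b $ a) = 2 * (\<Sum>a\<in>UNIV. \<Sum>b\<in>UNIV. (M $ a $ b)^2)"
    by (simp add: sym power2_eq_square sum_distrib_left)
  also have "(1/16) * ((\<Sum>a\<in>UNIV. M $ a $ a)^2 + 2 * (\<Sum>a\<in>UNIV. \<Sum>b\<in>UNIV. (M $ a $ b)^2))
        - (1/16) * (\<Sum>a\<in>UNIV. M $ a $ a)^2 = (1/8) * (\<Sum>a\<in>UNIV. \<Sum>b\<in>UNIV. (M $ a $ b)^2)"
    by (simp add: algebra_simps)
  finally show ?thesis unfolding lossf_def M_def by simp
qed


lemma has_derivative_entry[derivative_intros]:
  "((\<lambda>W::real^'n^'m. W $ k $ a) has_derivative (\<lambda>h. h $ k $ a)) F"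
proof -
  have "bounded_linear (\<lambda>W::real^'n^'m. W $ k $ a)"
    by (rule bounded_linear_compose[of "\<lambda>v. v $ a" "\<lambda>W. W $ k"]) (rule bounded_linear_vec_nth)+
  then show ?thesis by (rule bounded_linear_imp_has_derivative)
qed

lemma lossf_expand: "lossf Ws W = (1/8) * (\<Sum>a\<in>UNIV. \<Sum>b\<in>UNIV. ((transpose Ws ** Ws) $ a $ b - (\<Sum>k\<in>UNIV. W $ k $ a * W $ k $ b))^2)"
  for W :: "real^'d::finite^'d"
  unfolding lossf_def gram_entry ..

definition gradf :: "real^'d^'d \<Rightarrow> real^'d^'d \<Rightarrow> real^'d^'d" where
  "gradf Ws W = (1/2) *\<^sub>R (W ** (transpose W ** W - transpose Ws ** Ws))"

lemma inner_mat: "inner (h::real^'d::finite^'d) G = (\<Sum>k\<in>UNIV. \<Sum>a\<in>UNIV. h $ k $ a * G $ k $ a)"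
  by (simp add: inner_vec_def)

lemma lossf_deriv: "GDERIV (lossf Ws) W :> gradf Ws W"
  for Ws W :: "real^'d::finite^'d"
proof -
  define A where "A = transpose Ws ** Ws"
  define N where "N = transpose W ** W - A"
  have Nsym: "N $ b $ a = N $ a $ b" for a b
    unfolding N_def A_def using gram_sym[of Ws a b] gram_sym[of W a b] by simp
  have Nent: "N $ a $ b = (\<Sum>k\<in>UNIV. W $ k $ a * W $ k $ b) - A $ a $ b" for a b
    unfolding N_def by (simp add: gram_entry)
  have lf: "lossf Ws = (\<lambda>W. (1/8) * (\<Sum>a\<in>UNIV. \<Sum>b\<in>UNIV. (A $ a $ b - (\<Sum>k\<in>UNIV. W $ k $ a * W $ k $ b))^2))"
    unfolding A_def by (rule ext) (rule lossf_expand)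
  have e1: "A $ a $ b - (\<Sum>k\<in>UNIV. W $ k $ a * W $ k $ b) = - N $ a $ b" for a b
    by (simp add: Nent)
  have Gk: "gradf Ws W $ k $ a = (1/2) * (\<Sum>b\<in>UNIV. W $ k $ b * N $ a $ b)" for k a
    unfolding gradf_def N_def[symmetric] A_def[symmetric]
    by (simp add: matrix_matrix_mult_def Nsym)
  have X: "(\<Sum>a\<in>UNIV. \<Sum>b\<in>UNIV. \<Sum>k\<in>UNIV. W $ k $ a * h $ k $ b * N $ a $ b)
         = (\<Sum>a\<in>UNIV. \<Sum>b\<in>UNIV. \<Sum>k\<in>UNIV. h $ k $ a * W $ k $ b * N $ a $ b)" for h
    by (subst sum.swap) (simp add: Nsym mult_ac)
  have L: "(\<Sum>a\<in>UNIV. \<Sum>b\<in>UNIV. - (2 * (\<Sum>k\<in>UNIV. W $ k $ a * h $ k $ b + h $ k $ a * W $ k $ b) *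
                 (A $ a $ b - (\<Sum>k\<in>UNIV. W $ k $ a * W $ k $ b)))) / 8
     = (1/4) * ((\<Sum>a\<in>UNIV. \<Sum>b\<in>UNIV. \<Sum>k\<in>UNIV. W $ k $ a * h $ k $ b * N $ a $ b)
               + (\<Sum>a\<in>UNIV. \<Sum>b\<in>UNIV. \<Sum>k\<in>UNIV. h $ k $ a * W $ k $ b * N $ a $ b))" for h
    unfolding e1 by (simp add: sum_distrib_left sum_distrib_right sum.distrib algebra_simps sum_divide_distrib sum_negf sum_subtractf)
  have R: "h \<bullet> gradf Ws W = (1/2) * (\<Sum>a\<in>UNIV. \<Sum>b\<in>UNIV. \<Sum>k\<in>UNIV. h $ k $ a * W $ k $ b * N $ a $ b)" for h
  proof -
    have "h \<bullet> gradf Ws W = (1/2) * (\<Sum>k\<in>UNIV. \<Sum>a\<in>UNIV. \<Sum>b\<in>UNIV. h $ k $ a * W $ k $ b * N $ a $ b)"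
      unfolding inner_mat Gk by (simp add: sum_distrib_left algebra_simps)
    also have "(\<Sum>k\<in>UNIV. \<Sum>a\<in>UNIV. \<Sum>b\<in>UNIV. h $ k $ a * W $ k $ b * N $ a $ b)
       = (\<Sum>a\<in>UNIV. \<Sum>k\<in>UNIV. \<Sum>b\<in>UNIV. h $ k $ a * W $ k $ b * N $ a $ b)"
      by (rule sum.swap)
    also have "\<dots> = (\<Sum>a\<in>UNIV. \<Sum>b\<in>UNIV. \<Sum>k\<in>UNIV. h $ k $ a * W $ k $ b * N $ a $ b)"
      by (rule sum.cong[OF refl], rule sum.swap)
    finally show ?thesis .
  qed
  show ?thesis
    unfolding gderiv_def lf
    apply (rule has_derivative_eq_rhs)
     apply (rule derivative_eq_intros refl | simp)+
    apply (rule ext)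
    apply (subst L)
    apply (subst R)
    apply (subst X)
    by simp
qed


lemma sym_dot: "transpose A = A \<Longrightarrow> x \<bullet> ((A::real^'n^'n) *v y) = (A *v x) \<bullet> y"
  by (metis dot_lmul_matrix transpose_matrix_vector)

definition oeig :: "real^'n^'n \<Rightarrow> (real^'n) set \<Rightarrow> bool" where
  "oeig A B \<longleftrightarrow> finite B \<and> (\<forall>b\<in>B. norm b = 1 \<and> (\<exists>l. A *v b = l *\<^sub>R b)) \<and> (\<forall>b\<in>B. \<forall>c\<in>B. b \<noteq> c \<longrightarrow> b \<bullet> c = 0)"

lemma max_eigen:
  fixes A :: "real^'n^'n" and S :: "(real^'n) set"
  assumes symA: "transpose A = A" and sub: "subspace S" and inv: "\<And>x. x \<in> S \<Longrightarrow> A *v x \<in> S"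
    and v: "v \<in> S" "norm v = 1" and vmax: "\<And>y. y \<in> S \<Longrightarrow> norm y = 1 \<Longrightarrow> y \<bullet> (A *v y) \<le> v \<bullet> (A *v v)"
  shows "A *v v = (v \<bullet> (A *v v)) *\<^sub>R v"
proof -
  define l where "l = v \<bullet> (A *v v)"
  define f where "f y = y \<bullet> (A *v y)" for y
  have fscale: "f (c *\<^sub>R y) = c^2 * f y" for c y
    by (simp add: f_def matrix_vector_mult_scaleR power2_eq_square)
  have fbound: "f y \<le> l * (norm y)^2" if "y \<in> S" for y
  proof (cases "y = 0")
    case True then show ?thesis by (simp add: f_def)
  next
    case False
    then have ny: "norm y > 0" by simp
    have "(1 / norm y) *\<^sub>R y \<in> S" using sub that by (simp add: subspace_scale)
    moreover have "norm ((1 / norm y) *\<^sub>R y) = 1" using ny by simp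
    ultimately have "f ((1 / norm y) *\<^sub>R y) \<le> l" using vmax unfolding f_def l_def by blast
    then have "(1 / norm y)^2 * f y \<le> l" by (simp add: fscale)
    then have "f y \<le> l * (norm y)^2" using ny by (simp add: field_simps power2_eq_square)
    then show ?thesis .
  qed
  define u where "u = A *v v - l *\<^sub>R v"
  have uS: "u \<in> S" unfolding u_def using sub inv[OF v(1)] v(1)
    by (simp add: subspace_diff subspace_scale)
  have vv: "v \<bullet> v = 1" using v(2) by (simp add: norm_eq_1)
  have vu: "v \<bullet> u = 0" unfolding u_def l_def using vv by (simp add: inner_diff_right)
  have uAv: "u \<bullet> (A *v v) = u \<bullet> u"
  proof -
    have "A *v v = u + l *\<^sub>R v" unfolding u_def by simp
    then show ?thesis using vu by (simp add: inner_add_right inner_commute)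
  qed
  define c where "c = f u - l * (u \<bullet> u)"
  have key: "2 * s * (u \<bullet> u) + s^2 * c \<le> 0" for s
  proof -
    have wS: "v + s *\<^sub>R u \<in> S" using sub v(1) uS by (simp add: subspace_add subspace_scale)
    have fw: "f (v + s *\<^sub>R u) = l + 2 * s * (u \<bullet> u) + s^2 * f u"
    proof -
      have "f (v + s *\<^sub>R u) = v \<bullet> (A *v v) + s * (v \<bullet> (A *v u)) + s * (u \<bullet> (A *v v)) + s^2 * (u \<bullet> (A *v u))"
        by (simp add: f_def matrix_vector_right_distrib matrix_vector_mult_scaleR inner_add_left inner_add_right power2_eq_square algebra_simps)
      also have "v \<bullet> (A *v u) = u \<bullet> (A *v v)"
        using sym_dot[OF symA, of v u] by (simp add: inner_commute)
      finally show ?thesis unfolding l_def f_def[symmetric] uAv by (simp add: f_def)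
    qed
    have nw: "(norm (v + s *\<^sub>R u))^2 = 1 + s^2 * (u \<bullet> u)"
      unfolding power2_norm_eq_inner
      using vu by (simp add: inner_add_left inner_add_right vv inner_commute power2_eq_square)
    from fbound[OF wS] show ?thesis unfolding fw nw c_def by (simp add: algebra_simps)
  qed
  have "u \<bullet> u = 0"
  proof (rule ccontr)
    assume "u \<bullet> u \<noteq> 0"
    then have pos: "u \<bullet> u > 0" by (simp add: order_le_neq_trans)
    define s where "s = (u \<bullet> u) / (\<bar>c\<bar> + 1)"
    have s0: "s > 0" unfolding s_def using pos by simp
    have "s * \<bar>c\<bar> \<le> u \<bullet> u"
    proof -
      have "s * \<bar>c\<bar> = (u \<bullet> u) * (\<bar>c\<bar> / (\<bar>c\<bar> + 1))" unfolding s_def by simp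
      also have "\<dots> \<le> (u \<bullet> u) * 1" using pos by (intro mult_left_mono) auto
      finally show ?thesis by simp
    qed
    then have "s^2 * c \<ge> - (s * (u \<bullet> u))"
    proof -
      have "s^2 * (- \<bar>c\<bar>) \<le> s^2 * c" by (intro mult_left_mono) auto
      then have "s^2 * c \<ge> - (s * (s * \<bar>c\<bar>))" by (simp add: power2_eq_square)
      also have "- (s * (s * \<bar>c\<bar>)) \<ge> - (s * (u \<bullet> u))" using s0 \<open>s * \<bar>c\<bar> \<le> u \<bullet> u\<close> by simp
      finally show ?thesis .
    qed
    with key[of s] have "s * (u \<bullet> u) \<le> 0" by simp
    with s0 pos show False by (metis mult_pos_pos not_le)
  qed
  then have "u = 0" by simp
  then show ?thesis unfolding u_def l_def by simp
qed

lemma extend_eig: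
  fixes A :: "real^'n^'n" and B :: "(real^'n) set"
  assumes symA: "transpose A = A" and oe: "oeig A B" and cardB: "card B < CARD('n)"
  shows "\<exists>v. norm v = 1 \<and> (\<exists>l. A *v v = l *\<^sub>R v) \<and> (\<forall>b\<in>B. b \<bullet> v = 0)"
proof -
  define S where "S = {x. \<forall>b\<in>B. b \<bullet> x = 0}"
  have sub: "subspace S" unfolding S_def subspace_def by (auto simp: inner_add_right)
  have inv: "A *v x \<in> S" if "x \<in> S" for x
  proof -
    have "b \<bullet> (A *v x) = 0" if b: "b \<in> B" for b
    proof -
      obtain l where "A *v b = l *\<^sub>R b" using oe b unfolding oeig_def by blast
      then have "b \<bullet> (A *v x) = l * (b \<bullet> x)" using sym_dot[OF symA, of b x] by simp
      then show ?thesis using \<open>x \<in> S\<close> b unfolding S_def by simp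
    qed
    then show ?thesis unfolding S_def by blast
  qed
  have fin: "finite B" using oe unfolding oeig_def by blast
  have "dim B \<le> card B" using dim_le_card[OF span_superset fin] .
  then have "dim B < DIM(real^'n)" using cardB by simp
  then obtain x0 where x0: "x0 \<noteq> 0" "\<And>y. y \<in> span B \<Longrightarrow> orthogonal x0 y"
    using orthogonal_to_subspace_exists by blast
  have x0S: "x0 \<in> S" unfolding S_def using x0(2) span_superset
    by (auto simp: orthogonal_def inner_commute)
  define K where "K = S \<inter> sphere 0 1"
  have cK: "compact K" unfolding K_def using closed_subspace[OF sub]
    by (metis Int_commute compact_Int_closed compact_sphere)
  have nK: "(1 / norm x0) *\<^sub>R x0 \<in> K" unfolding K_def using x0S sub x0(1)
    by (simp add: subspace_scale)
  have ctK: "continuous_on K (\<lambda>y. y \<bullet> (A *v y))"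
    by (intro continuous_intros)
  obtain v where vK: "v \<in> K" and vmax: "\<And>y. y \<in> K \<Longrightarrow> y \<bullet> (A *v y) \<le> v \<bullet> (A *v v)"
    using continuous_attains_sup[OF cK _ ctK] nK by blast
  have vS: "v \<in> S" and nv: "norm v = 1" using vK unfolding K_def by auto
  have "A *v v = (v \<bullet> (A *v v)) *\<^sub>R v"
    by (rule max_eigen[OF symA sub inv vS nv]) (auto intro: vmax simp: K_def)
  then show ?thesis using nv vS unfolding S_def by blast
qed

lemma oeig_full:
  fixes A :: "real^'n^'n"
  assumes symA: "transpose A = A"
  shows "k \<le> CARD('n) \<Longrightarrow> \<exists>B. oeig A B \<and> card B = k"
proof (induction k)
  case 0
  show ?case by (rule exI[of _ "{}"]) (simp add: oeig_def)
next
  case (Suc k)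
  then obtain B where B: "oeig A B" "card B = k" by auto
  then obtain v where v: "norm v = 1" "\<exists>l. A *v v = l *\<^sub>R v" "\<forall>b\<in>B. b \<bullet> v = 0"
    using extend_eig[OF symA B(1)] Suc.prems by auto
  have vB: "v \<notin> B"
  proof
    assume "v \<in> B"
    then have "v \<bullet> v = 0" using v(3) by blast
    then show False using v(1) by simp
  qed
  have fin: "finite B" using B(1) unfolding oeig_def by blast
  have "oeig A (insert v B)"
    using B(1) v unfolding oeig_def by (auto simp: inner_commute)
  moreover have "card (insert v B) = Suc k" using vB fin B(2) by simp
  ultimately show ?case by blast
qed

lemma spectral:
  fixes A :: "real^'n^'n"
  assumes symA: "transpose A = A"
  shows "\<exists>Q. orthogonal_matrix Q \<and> (\<forall>i j. i \<noteq> j \<longrightarrow> (transpose Q ** A ** Q) $ i $ j = 0)"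
proof -
  obtain B where B: "oeig A B" "card B = CARD('n)" using oeig_full[OF symA] by blast
  have fin: "finite B" using B(1) unfolding oeig_def by blast
  obtain g where g: "bij_betw g (UNIV::'n set) B"
    using finite_same_card_bij[of "UNIV::'n set" B] fin B(2) by auto
  have gB: "g i \<in> B" for i using g by (auto simp: bij_betw_def)
  have ginj: "g i = g j \<Longrightarrow> i = j" for i j using g by (auto simp: bij_betw_def inj_def)
  define Q :: "real^'n^'n" where "Q = (\<chi> i j. g j $ i)"
  have gg: "g i \<bullet> g j = (if i = j then 1 else 0)" for i j
  proof (cases "i = j")
    case True
    then show ?thesis using B(1) gB[of i] unfolding oeig_def by (simp add: norm_eq_1)
  next
    case False
    then have "g i \<noteq> g j" using ginj by blast
    then show ?thesis using B(1) gB[of i] gB[of j] False unfolding oeig_def by auto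
  qed
  have "transpose Q ** Q = mat 1"
  proof -
    have "(transpose Q ** Q) $ i $ j = g i \<bullet> g j" for i j
      by (simp add: Q_def matrix_matrix_mult_def transpose_def inner_vec_def)
    then show ?thesis by (simp add: vec_eq_iff gg mat_def)
  qed
  then have oQ: "orthogonal_matrix Q" by (simp add: orthogonal_matrix)
  have "(transpose Q ** A ** Q) $ i $ j = 0" if "i \<noteq> j" for i j
  proof -
    have "(transpose Q ** A ** Q) $ i $ j = g i \<bullet> (A *v g j)"
      by (simp add: Q_def matrix_matrix_mult_def transpose_def inner_vec_def matrix_vector_mult_def
          sum_distrib_left sum_distrib_right mult_ac) (rule sum.swap)
    also obtain l where "A *v g j = l *\<^sub>R g j" using B(1) gB[of j] unfolding oeig_def by blast
    then have "g i \<bullet> (A *v g j) = l * (g i \<bullet> g j)" by simp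
    finally show ?thesis using gg[of i j] that by simp
  qed
  with oQ show ?thesis by blast
qed


lemma at_within_Ici_interior: "(t::real) > 0 \<Longrightarrow> at t within {0..} = at t"
  by (rule at_within_interior) simp

lemma gronwall0:
  fixes \<phi> \<phi>' :: "real \<Rightarrow> real" and K T :: real
  assumes der: "\<And>t. 0 \<le> t \<Longrightarrow> t \<le> T \<Longrightarrow> (\<phi> has_real_derivative \<phi>' t) (at t within {0..})"
    and bnd: "\<And>t. 0 \<le> t \<Longrightarrow> t \<le> T \<Longrightarrow> \<phi>' t \<le> K * \<phi> t"
    and z: "\<phi> 0 = 0" and nn: "\<And>t. 0 \<le> t \<Longrightarrow> t \<le> T \<Longrightarrow> \<phi> t \<ge> 0"
    and t: "0 \<le> t" "t \<le> T"
  shows "\<phi> t = 0"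
proof -
  define \<psi> where "\<psi> s = exp (- K * s) * \<phi> s" for s
  have dpsi: "(\<psi> has_real_derivative exp (- K * s) * \<phi>' s + (- K * exp (- K * s)) * \<phi> s) (at s within {0..})"
    if "0 \<le> s" "s \<le> T" for s
  proof -
    have "((\<lambda>s. exp (- K * s)) has_real_derivative (- K * exp (- K * s))) (at s within {0..})"
      by (auto intro!: derivative_eq_intros)
    from DERIV_mult'[OF this der[OF that]] show ?thesis
      unfolding \<psi>_def by (simp add: algebra_simps)
  qed
  have cont: "continuous_on {0..t} \<psi>"
    unfolding continuous_on_eq_continuous_within
  proof
    fix s assume "s \<in> {0..t}"
    then have "continuous (at s within {0..}) \<psi>"
      using dpsi[of s] t by (auto intro: DERIV_continuous)
    then show "continuous (at s within {0..t}) \<psi>"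
      by (rule continuous_within_subset) auto
  qed
  have "\<psi> 0 \<ge> \<psi> t"
  proof (rule DERIV_nonpos_imp_decreasing_open[OF t(1) _ cont])
    fix x assume x: "0 < x" "x < t"
    have "(\<psi> has_real_derivative exp (- K * x) * \<phi>' x + (- K * exp (- K * x)) * \<phi> x) (at x)"
      using dpsi[of x] x t at_within_Ici_interior[of x] by simp
    moreover have "exp (- K * x) * \<phi>' x + (- K * exp (- K * x)) * \<phi> x \<le> 0"
    proof -
      have "exp (- K * x) * \<phi>' x \<le> exp (- K * x) * (K * \<phi> x)"
        using bnd[of x] x t by (intro mult_left_mono) auto
      then show ?thesis by (simp add: algebra_simps)
    qed
    ultimately show "\<exists>y. DERIV \<psi> x :> y \<and> y \<le> 0" by blast
  qed
  then have "exp (- K * t) * \<phi> t \<le> 0" using z by (simp add: \<psi>_def)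
  then have "\<phi> t \<le> 0" by (simp add: mult_le_0_iff)
  with nn[OF t] show ?thesis by simp
qed


lemma matrix_sub_ldistrib: "(A::real^'n^'m) ** (B - C) = A ** B - A ** C"
  by (simp add: matrix_matrix_mult_def vec_eq_iff sum_subtractf algebra_simps)

lemma matrix_sub_rdistrib: "((B::real^'n^'m) - C) ** A = B ** A - C ** A"
  by (simp add: matrix_matrix_mult_def vec_eq_iff sum_subtractf algebra_simps)

lemma matrix_add_rdistrib: "((B::real^'n^'m) + C) ** A = B ** A + C ** A"
  by (simp add: matrix_matrix_mult_def vec_eq_iff sum.distrib algebra_simps)

lemma inner_mat2: "inner (h::real^'n^'m) G = (\<Sum>k\<in>UNIV. \<Sum>a\<in>UNIV. h $ k $ a * G $ k $ a)"
  by (simp add: inner_vec_def)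

lemma norm_sq_mat: "(norm (X::real^'n^'m))^2 = (\<Sum>i\<in>UNIV. \<Sum>j\<in>UNIV. (X $ i $ j)^2)"
proof -
  have "(norm X)^2 = inner X X" by (rule power2_norm_eq_inner)
  then show ?thesis by (simp add: inner_mat2 power2_eq_square)
qed

lemma norm_mat_mult: "norm ((X::real^'n^'m) ** (Y::real^'p^'n)) \<le> norm X * norm Y"
proof (rule power2_le_imp_le)
  have "(norm (X ** Y))^2 = (\<Sum>i\<in>UNIV. \<Sum>j\<in>UNIV. (\<Sum>k\<in>UNIV. X $ i $ k * Y $ k $ j)^2)"
    by (simp add: norm_sq_mat matrix_matrix_mult_def)
  also have "\<dots> \<le> (\<Sum>i\<in>UNIV. \<Sum>j\<in>UNIV. (\<Sum>k\<in>UNIV. (X $ i $ k)^2) * (\<Sum>k\<in>UNIV. (Y $ k $ j)^2))"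
    by (intro sum_mono Cauchy_Schwarz_ineq_sum)
  also have "\<dots> = (\<Sum>i\<in>UNIV. \<Sum>k\<in>UNIV. (X $ i $ k)^2) * (\<Sum>j\<in>UNIV. \<Sum>k\<in>UNIV. (Y $ k $ j)^2)"
    by (simp add: sum_product)
  also have "(\<Sum>j\<in>UNIV. \<Sum>k\<in>UNIV. (Y $ k $ j)^2) = (\<Sum>k\<in>UNIV. \<Sum>j\<in>UNIV. (Y $ k $ j)^2)"
    by (rule sum.swap)
  also have "(\<Sum>i\<in>UNIV. \<Sum>k\<in>UNIV. (X $ i $ k)^2) * (\<Sum>k\<in>UNIV. \<Sum>j\<in>UNIV. (Y $ k $ j)^2) = (norm X * norm Y)^2"
    by (simp add: norm_sq_mat power_mult_distrib)
  finally show "(norm (X ** Y))^2 \<le> (norm X * norm Y)^2" .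
qed simp


definition offd :: "real^'n^'n \<Rightarrow> real^'n^'n" where
  "offd X = (\<chi> i j. if i = j then 0 else X $ i $ j)"

definition isdiag :: "real^'n^'n \<Rightarrow> bool" where
  "isdiag X \<longleftrightarrow> (\<forall>i j. i \<noteq> j \<longrightarrow> X $ i $ j = 0)"

definition Fm :: "real^'n^'n \<Rightarrow> real^'n^'n \<Rightarrow> real^'n^'n" where
  "Fm D X = (1/2) *\<^sub>R ((D - X) ** X + X ** (D - X))"

lemma offd_nth: "offd X $ i $ j = (if i = j then 0 else X $ i $ j)"
  by (simp add: offd_def)

lemma isdiag_mult: "isdiag X \<Longrightarrow> isdiag Y \<Longrightarrow> isdiag (X ** Y)"
  unfolding isdiag_def matrix_matrix_mult_def
  apply (auto intro!: sum.neutral)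
  by metis

lemma isdiag_add: "isdiag X \<Longrightarrow> isdiag Y \<Longrightarrow> isdiag (X + Y)"
  unfolding isdiag_def by simp

lemma isdiag_diff: "isdiag X \<Longrightarrow> isdiag Y \<Longrightarrow> isdiag (X - Y)"
  unfolding isdiag_def by simp

lemma isdiag_scale: "isdiag X \<Longrightarrow> isdiag (c *\<^sub>R X)"
  unfolding isdiag_def by simp

lemma isdiag_sub_offd: "isdiag (X - offd X)"
  unfolding isdiag_def by (simp add: offd_nth)

lemma inner_offd_diag: "isdiag Z \<Longrightarrow> inner (offd X) Z = 0"
  unfolding inner_mat2 isdiag_def by (auto simp: offd_nth intro!: sum.neutral)

lemma offd_zero_iff: "offd X = 0 \<longleftrightarrow> isdiag X"
  unfolding isdiag_def offd_def vec_eq_iff by auto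

lemma half_aux: "(1/2::real) *\<^sub>R ((a - c) + (b - c)) = (1/2) *\<^sub>R (a + b) - (c::'a::real_vector)"
proof -
  have "c = (1/2::real) *\<^sub>R c + (1/2) *\<^sub>R c" by (simp flip: scaleR_add_left)
  then have "(1/2::real) *\<^sub>R ((a - c) + (b - c)) = (1/2) *\<^sub>R (a + b) - ((1/2::real) *\<^sub>R c + (1/2) *\<^sub>R c)"
    by (simp add: algebra_simps)
  then show ?thesis by (metis \<open>c = _\<close>)
qed

lemma Fm_alt: "Fm D X = (1/2) *\<^sub>R (D ** X + X ** D) - X ** X"
  unfolding Fm_def matrix_sub_ldistrib matrix_sub_rdistrib
  by (rule half_aux)

lemma Fm_diag: "isdiag D \<Longrightarrow> isdiag X \<Longrightarrow> isdiag (Fm D X)"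
  unfolding Fm_alt by (intro isdiag_diff isdiag_scale isdiag_add isdiag_mult)

lemma Fm_split:
  fixes D P :: "real^'n^'n"
  defines "Om \<equiv> offd P"
  defines "Dg \<equiv> P - offd P"
  shows "Fm D P = Fm D Dg + ((1/2) *\<^sub>R (D ** Om + Om ** D) - (P ** Om + Om ** Dg))"
proof -
  have PD: "P = Dg + Om" unfolding Om_def Dg_def by simp
  have "Fm D P - Fm D Dg = (1/2) *\<^sub>R (D ** Om + Om ** D) - (P ** Om + Om ** Dg)"
    unfolding Fm_alt
    apply (subst (1 2 3 4 5) PD)
    by (simp add: matrix_add_ldistrib matrix_add_rdistrib algebra_simps scaleR_add_right)
  then show ?thesis by (simp add: algebra_simps)
qed

lemma offd_bound:
  fixes D P :: "real^'n^'n"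
  assumes "isdiag D"
  shows "\<bar>inner (offd P) (Fm D P)\<bar> \<le> (norm D + norm P + norm (P - offd P)) * (norm (offd P))^2"
proof -
  define Om where "Om = offd P"
  define Dg where "Dg = P - offd P"
  define E where "E = (1/2) *\<^sub>R (D ** Om + Om ** D) - (P ** Om + Om ** Dg)"
  have "inner Om (Fm D P) = inner Om (Fm D Dg) + inner Om E"
    unfolding Om_def Dg_def E_def by (subst Fm_split) (simp add: inner_add_right)
  also have "inner Om (Fm D Dg) = 0"
    unfolding Om_def Dg_def by (intro inner_offd_diag Fm_diag assms isdiag_sub_offd)
  finally have eq: "inner Om (Fm D P) = inner Om E" by simp
  have nE: "norm E \<le> (norm D + norm P + norm Dg) * norm Om"
  proof -
    have "norm E \<le> norm ((1/2) *\<^sub>R (D ** Om + Om ** D)) + norm (P ** Om + Om ** Dg)"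
      unfolding E_def by (rule norm_triangle_ineq4)
    also have "norm ((1/2) *\<^sub>R (D ** Om + Om ** D)) \<le> (1/2) * (norm D * norm Om + norm Om * norm D)"
      using norm_triangle_le[OF add_mono[OF norm_mat_mult[of D Om] norm_mat_mult[of Om D]]] by simp
    also have "norm (P ** Om + Om ** Dg) \<le> norm P * norm Om + norm Om * norm Dg"
      using norm_triangle_le[OF add_mono[OF norm_mat_mult[of P Om] norm_mat_mult[of Om Dg]]] by simp
    finally show ?thesis by (simp add: algebra_simps)
  qed
  have "\<bar>inner Om E\<bar> \<le> norm Om * norm E" by (rule Cauchy_Schwarz_ineq2)
  also have "\<dots> \<le> norm Om * ((norm D + norm P + norm Dg) * norm Om)"
    by (intro mult_left_mono nE) simp
  finally have "\<bar>inner Om E\<bar> \<le> norm Om * ((norm D + norm P + norm Dg) * norm Om)" .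
  then show ?thesis using eq unfolding Om_def Dg_def by (simp add: power2_eq_square algebra_simps)
qed


lemma transpose_diff: "transpose ((X::real^'n^'m) - Y) = transpose X - transpose Y"
  by (simp add: transpose_def vec_eq_iff)
lemma transpose_add: "transpose ((X::real^'n^'m) + Y) = transpose X + transpose Y"
  by (simp add: transpose_def vec_eq_iff)
lemma transpose_neg: "transpose (- (X::real^'n^'m)) = - transpose X"
  by (simp add: transpose_def vec_eq_iff)
lemma matrix_neg_left: "(- (X::real^'n^'m)) ** Y = - (X ** Y)"
  by (simp add: matrix_matrix_mult_def vec_eq_iff sum_negf)
lemma matrix_neg_right: "(X::real^'n^'m) ** (- Y) = - (X ** Y)"
  by (simp add: matrix_matrix_mult_def vec_eq_iff sum_negf)

lemma gram_transpose: "transpose (transpose W ** W) = transpose W ** (W::real^'n^'m)"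
  by (simp add: matrix_transpose_mul)

lemma flow_alg:
  fixes Q A W :: "real^'n^'n"
  assumes QQ2: "Q ** transpose Q = mat 1" and symA: "transpose A = A"
  shows "transpose Q ** (transpose (- ((1/2) *\<^sub>R (W ** (transpose W ** W - A)))) ** W
            + transpose W ** (- ((1/2) *\<^sub>R (W ** (transpose W ** W - A))))) ** Q
       = Fm (transpose Q ** A ** Q) (transpose Q ** (transpose W ** W) ** Q)"
proof -
  define B where "B = transpose W ** W"
  have symB: "transpose B = B" unfolding B_def by (rule gram_transpose)
  have h1: "transpose (- ((1/2) *\<^sub>R (W ** (B - A)))) ** W = (1/2) *\<^sub>R ((A - B) ** B)"
  proof -
    have "transpose (- ((1/2) *\<^sub>R (W ** (B - A)))) = (1/2) *\<^sub>R ((A - B) ** transpose W)"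
      by (simp add: transpose_neg transpose_scalar matrix_transpose_mul transpose_diff symA symB
          matrix_sub_rdistrib scaleR_diff_right)
    then show ?thesis
      by (simp add: B_def matrix_mul_assoc scalar_matrix_assoc[symmetric])
  qed
  have h2: "transpose W ** (- ((1/2) *\<^sub>R (W ** (B - A)))) = (1/2) *\<^sub>R (B ** (A - B))"
    by (simp add: B_def matrix_neg_right matrix_scalar_ac matrix_mul_assoc matrix_sub_ldistrib
        scalar_matrix_assoc[symmetric] scaleR_diff_right)
  have QX: "Q ** (transpose Q ** X) = X" for X
    by (simp add: matrix_mul_assoc QQ2)
  have "transpose Q ** ((1/2) *\<^sub>R ((A - B) ** B) + (1/2) *\<^sub>R (B ** (A - B))) ** Q
     = (1/2) *\<^sub>R ((transpose Q ** (A - B) ** Q) ** (transpose Q ** B ** Q)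
                 + (transpose Q ** B ** Q) ** (transpose Q ** (A - B) ** Q))"
    by (simp add: matrix_add_ldistrib matrix_add_rdistrib matrix_scalar_ac scalar_matrix_assoc[symmetric]
        matrix_mul_assoc[symmetric] QX scaleR_add_right)
  also have "transpose Q ** (A - B) ** Q = transpose Q ** A ** Q - transpose Q ** B ** Q"
    by (simp add: matrix_sub_ldistrib matrix_sub_rdistrib)
  finally show ?thesis unfolding B_def[symmetric] h1 h2 Fm_def .
qed


definition mder :: "(real \<Rightarrow> real^'n^'m) \<Rightarrow> real^'n^'m \<Rightarrow> real \<Rightarrow> bool" where
  "mder X X' t \<longleftrightarrow> (\<forall>i j. ((\<lambda>s. X s $ i $ j) has_real_derivative X' $ i $ j) (at t within {0..}))"

lemma mder_vd:
  fixes X :: "real \<Rightarrow> real^'n^'m"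
  assumes "(X has_vector_derivative V) (at t within {0..})"
  shows "mder X V t"
  unfolding mder_def
proof (intro allI)
  fix i j
  have bl: "bounded_linear (\<lambda>W::real^'n^'m. W $ i $ j)"
    by (rule bounded_linear_compose[of "\<lambda>v. v $ j" "\<lambda>W. W $ i"]) (rule bounded_linear_vec_nth)+
  have "((\<lambda>s. X s $ i $ j) has_derivative (\<lambda>h. (h *\<^sub>R V) $ i $ j)) (at t within {0..})"
    using bounded_linear.has_derivative[OF bl assms[unfolded has_vector_derivative_def]] by simp
  then show "((\<lambda>s. X s $ i $ j) has_real_derivative V $ i $ j) (at t within {0..})"
  proof -
    have "(\<lambda>h. (h *\<^sub>R V) $ i $ j) = (*) (V $ i $ j)" by (rule ext) (simp add: mult.commute)
    then show ?thesis using \<open>((\<lambda>s. X s $ i $ j) has_derivative (\<lambda>h. (h *\<^sub>R V) $ i $ j)) (at t within {0..})\<close>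
      unfolding has_field_derivative_def by simp
  qed
qed

lemma mder_mult:
  fixes X :: "real \<Rightarrow> real^'n^'m" and Y :: "real \<Rightarrow> real^'p^'n"
  assumes "mder X X' t" "mder Y Y' t"
  shows "mder (\<lambda>s. X s ** Y s) (X' ** Y t + X t ** Y') t"
  unfolding mder_def
proof (intro allI)
  fix i j
  have "((\<lambda>s. \<Sum>k\<in>UNIV. X s $ i $ k * Y s $ k $ j) has_real_derivative
        (\<Sum>k\<in>UNIV. X t $ i $ k * Y' $ k $ j + X' $ i $ k * Y t $ k $ j)) (at t within {0..})"
    using assms unfolding mder_def by (intro DERIV_sum DERIV_mult') auto
  then show "((\<lambda>s. (X s ** Y s) $ i $ j) has_real_derivative (X' ** Y t + X t ** Y') $ i $ j) (at t within {0..})"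
    by (simp add: matrix_matrix_mult_def sum.distrib algebra_simps)
qed

lemma mder_transpose:
  assumes "mder X X' t"
  shows "mder (\<lambda>s. transpose (X s)) (transpose X') t"
  using assms unfolding mder_def by (simp add: transpose_def)

lemma mder_const: "mder (\<lambda>s. C) 0 t"
  unfolding mder_def by simp

lemma mder_cont:
  assumes "\<And>t. 0 \<le> t \<Longrightarrow> t \<le> T \<Longrightarrow> \<exists>X'. mder X X' t"
  shows "continuous_on {0..T} X"
proof -
  have "continuous_on {0..T} (\<lambda>s. X s $ i $ j)" for i j
    unfolding continuous_on_eq_continuous_within
  proof
    fix s assume s: "s \<in> {0..T}"
    then obtain X' where "mder X X' s" using assms by auto
    then have "continuous (at s within {0..}) (\<lambda>s. X s $ i $ j)"
      unfolding mder_def by (blast intro: DERIV_continuous)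
    then show "continuous (at s within {0..T}) (\<lambda>s. X s $ i $ j)"
      by (rule continuous_within_subset) auto
  qed
  then have "continuous_on {0..T} (\<lambda>s. \<chi> i. \<chi> j. X s $ i $ j)"
    by (intro continuous_on_vec_lambda)
  then show ?thesis by simp
qed


lemma gderiv_unique: "GDERIV f x :> G1 \<Longrightarrow> GDERIV f x :> G2 \<Longrightarrow> G1 = G2"
proof -
  assume a: "GDERIV f x :> G1" "GDERIV f x :> G2"
  have "(\<lambda>h. inner h G1) = (\<lambda>h. inner h G2)"
    using has_derivative_unique a unfolding gderiv_def by blast
  then have "inner (G1 - G2) G1 = inner (G1 - G2) G2" by metis
  then have "inner (G1 - G2) (G1 - G2) = 0" by (simp add: inner_diff_right)
  then show ?thesis by simp
qed

lemma inner_offd_offd: "inner (offd X) (offd Y) = inner (offd X) Y"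
proof -
  have "inner (offd X) (Y - offd Y) = 0" by (rule inner_offd_diag[OF isdiag_sub_offd])
  then show ?thesis by (simp add: inner_diff_right)
qed

lemma norm_offd_le: "norm (offd X) \<le> norm X"
proof (rule power2_le_imp_le)
  show "(norm (offd X))^2 \<le> (norm X)^2"
    unfolding norm_sq_mat by (intro sum_mono) (simp add: offd_nth)
qed simp

lemma sum_single_nz: "(\<And>k. k \<noteq> i \<Longrightarrow> f k = 0) \<Longrightarrow> (\<Sum>k\<in>(UNIV::'n::finite set). f k) = (f i::real)"
proof -
  assume "\<And>k. k \<noteq> i \<Longrightarrow> f k = 0"
  then have "(\<Sum>k\<in>UNIV. f k) = (\<Sum>k\<in>UNIV. if k = i then f i else 0)"
    by (intro sum.cong) auto
  then show ?thesis by simp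
qed

lemma Fm_diag_entry:
  assumes "isdiag D" "isdiag X"
  shows "Fm D X $ i $ i = X $ i $ i * (D $ i $ i - X $ i $ i)"
proof -
  have 1: "((D - X) ** X) $ i $ i = (D $ i $ i - X $ i $ i) * X $ i $ i"
    unfolding matrix_matrix_mult_def using assms unfolding isdiag_def
    by (simp, subst sum_single_nz[of i]) auto
  have 2: "(X ** (D - X)) $ i $ i = X $ i $ i * (D $ i $ i - X $ i $ i)"
    unfolding matrix_matrix_mult_def using assms unfolding isdiag_def
    by (simp, subst sum_single_nz[of i]) auto
  show ?thesis unfolding Fm_def using 1 2 by (simp add: algebra_simps)
qed

theorem theorem5:
  fixes Ws :: "real^'d^'d" and W :: "real \<Rightarrow> real^'d^'d" and \<sigma>0 :: real
  assumes "\<sigma>0 > 0"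
    and "transpose (W 0) ** W 0 = \<sigma>0 *\<^sub>R mat 1"
    and flow: "\<And>t. t \<ge> 0 \<Longrightarrow> \<exists>G. (GDERIV (loss_var Ws) (W t) :> G)
                      \<and> (W has_vector_derivative (- G)) (at t within {0..})"
  shows "\<exists>Q :: real^'d^'d. orthogonal_matrix Q
     \<and> (\<forall>i j. i \<noteq> j \<longrightarrow> (transpose Q ** (transpose Ws ** Ws) ** Q) $ i $ j = 0)
     \<and> (\<forall>t\<ge>0. \<forall>i j. i \<noteq> j \<longrightarrow> (transpose Q ** (transpose (W t) ** W t) ** Q) $ i $ j = 0)
     \<and> (\<forall>t\<ge>0. \<forall>i.
          let \<sigma> = (\<lambda>s. (transpose Q ** (transpose (W s) ** W s) ** Q) $ i $ i);
              \<sigma>s = (transpose Q ** (transpose Ws ** Ws) ** Q) $ i $ i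
          in (\<sigma> has_real_derivative (\<sigma> t * (\<sigma>s - \<sigma> t))) (at t within {0..}))"
proof -
  define A where "A = transpose Ws ** Ws"
  have symA: "transpose A = A" unfolding A_def by (rule gram_transpose)
  obtain Q where oQ: "orthogonal_matrix Q"
    and QA: "\<forall>i j. i \<noteq> j \<longrightarrow> (transpose Q ** A ** Q) $ i $ j = 0"
    using spectral[OF symA] by blast
  have QQ1: "transpose Q ** Q = mat 1" and QQ2: "Q ** transpose Q = mat 1"
    using oQ unfolding orthogonal_matrix_def by auto
  define D where "D = transpose Q ** A ** Q"
  have Ddiag: "isdiag D" using QA unfolding isdiag_def D_def by blast
  define P where "P s = transpose Q ** (transpose (W s) ** W s) ** Q" for s
  have lossfun: "loss_var Ws = lossf Ws" by (rule ext) (rule loss_var_eq)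
  have Pder: "mder P (Fm D (P t)) t" if t0: "t \<ge> 0" for t
  proof -
    obtain G where G: "GDERIV (loss_var Ws) (W t) :> G"
      and WV: "(W has_vector_derivative (- G)) (at t within {0..})"
      using flow[OF t0] by blast
    have "G = gradf Ws (W t)" using gderiv_unique[OF G[unfolded lossfun] lossf_deriv] .
    then have WV': "(W has_vector_derivative (- ((1/2) *\<^sub>R (W t ** (transpose (W t) ** W t - A))))) (at t within {0..})"
      using WV by (simp add: gradf_def A_def)
    define V where "V = - ((1/2) *\<^sub>R (W t ** (transpose (W t) ** W t - A)))"
    have mW: "mder W V t" unfolding V_def by (rule mder_vd[OF WV'])
    have "mder P (transpose Q ** (transpose V ** W t + transpose (W t) ** V) ** Q) t"
      using mder_mult[OF mder_mult[OF mder_const mder_mult[OF mder_transpose[OF mW] mW]] mder_const]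
      unfolding P_def by simp
    also have "transpose Q ** (transpose V ** W t + transpose (W t) ** V) ** Q = Fm D (P t)"
      unfolding V_def D_def P_def by (rule flow_alg[OF QQ2 symA])
    finally show ?thesis .
  qed
  have Pdiag: "isdiag (P t)" if t: "t \<ge> 0" for t
  proof -
    define \<phi> where "\<phi> s = (norm (offd (P s)))^2" for s
    define \<phi>' where "\<phi>' s = 2 * inner (offd (P s)) (Fm D (P s))" for s
    have \<phi>_eq: "\<phi> = (\<lambda>s. \<Sum>i\<in>UNIV. \<Sum>j\<in>UNIV. (if i = j then 0 else P s $ i $ j)^2)"
      by (rule ext) (simp add: \<phi>_def norm_sq_mat offd_nth)
    have der: "(\<phi> has_real_derivative \<phi>' s) (at s within {0..})" if s: "0 \<le> s" for s
    proof -
      have "((\<lambda>s. \<Sum>i\<in>UNIV. \<Sum>j\<in>UNIV. (if i = j then 0 else P s $ i $ j)^2) has_real_derivative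
             (\<Sum>i\<in>UNIV. \<Sum>j\<in>UNIV. (if i = j then 0 else 2 * P s $ i $ j * Fm D (P s) $ i $ j))) (at s within {0..})"
      proof (intro DERIV_sum)
        fix i j
        show "((\<lambda>s. (if i = j then 0 else P s $ i $ j)^2) has_real_derivative
             (if i = j then 0 else 2 * P s $ i $ j * Fm D (P s) $ i $ j)) (at s within {0..})"
        proof (cases "i = j")
          case True then show ?thesis by simp
        next
          case False
          have "((\<lambda>s. P s $ i $ j) has_real_derivative Fm D (P s) $ i $ j) (at s within {0..})"
            using Pder[OF s] unfolding mder_def by blast
          from DERIV_mult'[OF this this] False show ?thesis
            by (simp add: power2_eq_square algebra_simps)
        qed
      qed
      moreover have "(\<Sum>i\<in>UNIV. \<Sum>j\<in>UNIV. (if i = j then 0 else 2 * P s $ i $ j * Fm D (P s) $ i $ j)) = \<phi>' s"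
      proof -
        have "\<phi>' s = 2 * inner (offd (P s)) (offd (Fm D (P s)))"
          unfolding \<phi>'_def inner_offd_offd ..
        also have "\<dots> = (\<Sum>i\<in>UNIV. \<Sum>j\<in>UNIV. (if i = j then 0 else 2 * P s $ i $ j * Fm D (P s) $ i $ j))"
          by (simp add: inner_mat2 offd_nth sum_distrib_left if_distrib mult.assoc cong: if_cong)
        finally show ?thesis by simp
      qed
      ultimately show ?thesis unfolding \<phi>_eq by simp
    qed
    have contP: "continuous_on {0..t} P"
      by (rule mder_cont) (use Pder in blast)
    then have "continuous_on {0..t} (\<lambda>s. norm (P s))" by (intro continuous_intros)
    then obtain s0 where "s0 \<in> {0..t}" and M: "\<And>s. s \<in> {0..t} \<Longrightarrow> norm (P s) \<le> norm (P s0)"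
      using continuous_attains_sup[of "{0..t}" "\<lambda>s. norm (P s)"] t by fastforce
    define K where "K = 2 * (norm D + 3 * norm (P s0))"
    have bnd: "\<phi>' s \<le> K * \<phi> s" if s: "0 \<le> s" "s \<le> t" for s
    proof -
      have "\<phi>' s \<le> 2 * \<bar>inner (offd (P s)) (Fm D (P s))\<bar>" unfolding \<phi>'_def by simp
      also have "\<dots> \<le> 2 * ((norm D + norm (P s) + norm (P s - offd (P s))) * (norm (offd (P s)))^2)"
        using offd_bound[OF Ddiag, of "P s"] by simp
      also have "\<dots> \<le> K * \<phi> s"
      proof -
        have "norm (P s - offd (P s)) \<le> norm (P s) + norm (offd (P s))" by (rule norm_triangle_ineq4)
        also have "\<dots> \<le> 2 * norm (P s0)" using norm_offd_le[of "P s"] M[of s] s by simp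
        finally have "norm D + norm (P s) + norm (P s - offd (P s)) \<le> norm D + 3 * norm (P s0)"
          using M[of s] s by simp
        then have "(norm D + norm (P s) + norm (P s - offd (P s))) * (norm (offd (P s)))^2
                   \<le> (norm D + 3 * norm (P s0)) * (norm (offd (P s)))^2"
          by (rule mult_right_mono) simp
        then show ?thesis unfolding K_def \<phi>_def by (simp add: algebra_simps)
      qed
      finally show ?thesis .
    qed
    have z: "\<phi> 0 = 0"
    proof -
      have "P 0 = \<sigma>0 *\<^sub>R mat 1"
        unfolding P_def assms(2) by (simp add: matrix_scalar_ac scalar_matrix_assoc[symmetric] QQ1)
      then have "isdiag (P 0)" by (simp add: isdiag_def mat_def)
      then show ?thesis unfolding \<phi>_def by (simp add: offd_zero_iff[symmetric])
    qed
    have "\<phi> t = 0"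
      by (rule gronwall0[of t \<phi> \<phi>' K]) (use der bnd z t in \<open>auto simp: \<phi>_def\<close>)
    then have "offd (P t) = 0" unfolding \<phi>_def by simp
    then show ?thesis by (simp add: offd_zero_iff)
  qed
  have part2: "\<forall>i j. i \<noteq> j \<longrightarrow> (transpose Q ** (transpose Ws ** Ws) ** Q) $ i $ j = 0"
    using QA unfolding A_def .
  have part3: "\<forall>t\<ge>0. \<forall>i j. i \<noteq> j \<longrightarrow> (transpose Q ** (transpose (W t) ** W t) ** Q) $ i $ j = 0"
    using Pdiag unfolding isdiag_def P_def by blast
  have part4: "\<forall>t\<ge>0. \<forall>i.
          let \<sigma> = (\<lambda>s. (transpose Q ** (transpose (W s) ** W s) ** Q) $ i $ i);
              \<sigma>s = (transpose Q ** (transpose Ws ** Ws) ** Q) $ i $ i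
          in (\<sigma> has_real_derivative (\<sigma> t * (\<sigma>s - \<sigma> t))) (at t within {0..})"
  proof (intro allI impI)
    fix t :: real and i assume t: "t \<ge> 0"
    have "((\<lambda>s. P s $ i $ i) has_real_derivative Fm D (P t) $ i $ i) (at t within {0..})"
      using Pder[OF t] unfolding mder_def by blast
    also have "Fm D (P t) $ i $ i = P t $ i $ i * (D $ i $ i - P t $ i $ i)"
      by (rule Fm_diag_entry[OF Ddiag Pdiag[OF t]])
    finally show "let \<sigma> = (\<lambda>s. (transpose Q ** (transpose (W s) ** W s) ** Q) $ i $ i);
              \<sigma>s = (transpose Q ** (transpose Ws ** Ws) ** Q) $ i $ i
          in (\<sigma> has_real_derivative (\<sigma> t * (\<sigma>s - \<sigma> t))) (at t within {0..})"
      unfolding Let_def P_def D_def A_def .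
  qed
  show ?thesis using oQ part2 part3 part4 by blast
qed


end
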